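(* Let $\varepsilon>0$ and let $H,K\colon(-\varepsilon;\varepsilon)\to\mathbb{R}$ be real analytic functions with $K(0)<0$. Then $4H(t)^2=-t^2K(t)$ for all $|t|<\varepsilon$ if and only if $H(0)=0$ and $$H^{(m)}=\pm\frac{-mK^{(m-1)}-\frac{4}{m+1}\sum_{r=2}^{m-1}\binom{m+1}{r}H^{(r)}H^{(m-r+1)}}{2^{2-\delta_{m1}}\sqrt{-K^{(0)}}}\qquad\text{for each }m=1,2,\dots,$$ where $H^{(i)}$ and $K^{(i)}$ denote the $i$-th derivatives at $t=0$ and the same choice of sign $\pm$ is used for all $m$.
   Context: $\delta_{mn}=1$ if $m=n$ and $0$ otherwise. An empty sum equals $0$. *)

theory Defs
  imports "HOL-Analysis.Analysis"
begin

definition real_analytic_on :: "(real \<Rightarrow> real) \<Rightarrow> real set \<Rightarrow> bool" where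
  "real_analytic_on f S \<longleftrightarrow>
     (\<forall>x\<in>S. \<exists>r>0. \<exists>a::nat \<Rightarrow> real. \<forall>y. \<bar>y - x\<bar> < r \<longrightarrow> (\<lambda>n. a n * (y - x) ^ n) sums f y)"

definition kdelta :: "nat \<Rightarrow> nat \<Rightarrow> nat" where
  "kdelta m n = (if m = n then 1 else 0)"

end

theory Submission
  imports Defs "HOL-Complex_Analysis.Complex_Analysis"
begin


definition PP :: "(nat \<Rightarrow> real) \<Rightarrow> (nat \<Rightarrow> real) \<Rightarrow> nat \<Rightarrow> real" where
  "PP h k n = 4 * (\<Sum>i\<le>n. real (n choose i) * h i * h (n - i)) +
     (if n \<ge> 2 then real n * real (n - 1) * k (n - 2) else 0)"

definition QQ :: "(nat \<Rightarrow> real) \<Rightarrow> nat \<Rightarrow> real" where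
  "QQ h m = (\<Sum>r\<in>{2..m - 1}. real ((m + 1) choose r) * h r * h (m - r + 1))"

lemma PP0: "PP h k 0 = 4 * (h 0)^2" by (simp add: PP_def power2_eq_square)
lemma PP1: "PP h k 1 = 8 * h 0 * h 1" by (simp add: PP_def)
lemma PP2: "h 0 = 0 \<Longrightarrow> PP h k 2 = 8 * (h 1)^2 + 2 * k 0"
  by (simp add: PP_def numeral_2_eq_2 power2_eq_square)

lemma PPm:
  assumes "h 0 = 0" "m \<ge> 2"
  shows "PP h k (m + 1) = 4 * (2 * real (m + 1) * h 1 * h m + QQ h m) + real (m+1) * real m * k (m - 1)"
proof -
  have split: "{..m+1} = {0, 1, m, m+1} \<union> {2..m-1}" using assms(2) by auto
  have "(\<Sum>i\<le>m+1. real ((m+1) choose i) * h i * h (m + 1 - i)) =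
     (\<Sum>i\<in>{0, 1, m, m+1}. real ((m+1) choose i) * h i * h (m + 1 - i)) + 
     (\<Sum>i\<in>{2..m-1}. real ((m+1) choose i) * h i * h (m + 1 - i))"
    unfolding split by (rule sum.union_disjoint) auto
  also have "(\<Sum>i\<in>{0, 1, m, m+1}. real ((m+1) choose i) * h i * h (m + 1 - i)) = 2 * real (m + 1) * h 1 * h m"
    using assms by (simp add: binomial_n_n)
  also have "(\<Sum>i\<in>{2..m-1}. real ((m+1) choose i) * h i * h (m + 1 - i)) = QQ h m"
    unfolding QQ_def by (intro sum.cong refl) (auto simp: Suc_diff_le)
  finally show ?thesis using assms unfolding PP_def by simp
qed

lemma alg:
  fixes h k :: "nat \<Rightarrow> real"
  assumes k0: "k 0 < 0"
  shows "(\<forall>n. PP h k n = 0) \<longleftrightarrow>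
    (h 0 = 0 \<and> (\<exists>\<sigma>::real. \<sigma> \<in> {1, -1} \<and> (\<forall>m::nat. m \<ge> 1 \<longrightarrow>
       h m = \<sigma> * (- (real m * k (m - 1)) - 4 / real (m + 1) * QQ h m)
                  / (2 ^ (2 - kdelta m 1) * sqrt (- k 0)))))"
proof -
  define s where "s = sqrt (- k 0)"
  have s0: "s > 0" using k0 by (simp add: s_def)
  have ss: "s * s = - k 0" using k0 by (simp add: s_def)
  have QQ1: "QQ h 1 = 0" "QQ h (Suc 0) = 0" by (simp_all add: QQ_def)
  show ?thesis
  proof
    assume A: "\<forall>n. PP h k n = 0"
    have h0: "h 0 = 0" using A[rule_format, of 0] by (simp add: PP0)
    have P2: "8 * (h 1)^2 + 2 * k 0 = 0" using A[rule_format, of 2] PP2[of h k, OF h0] by simp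
    define \<sigma> where "\<sigma> = (if h 1 > 0 then 1 else (-1::real))"
    have "(2 * h 1)^2 = s^2" using P2 ss by (simp add: power2_eq_square)
    hence "\<bar>2 * h 1\<bar> = s" using s0 by (metis abs_of_pos power2_eq_iff_nonneg abs_ge_zero abs_power2 real_sqrt_abs)
    hence h1: "2 * h 1 = \<sigma> * s" unfolding \<sigma>_def using s0 by (auto split: if_splits simp: abs_if)
    have \<sigma>sq: "\<sigma> * \<sigma> = 1" by (simp add: \<sigma>_def)
    have "\<forall>m::nat. m \<ge> 1 \<longrightarrow>
       h m = \<sigma> * (- (real m * k (m - 1)) - 4 / real (m + 1) * QQ h m)
                  / (2 ^ (2 - kdelta m 1) * sqrt (- k 0))"
    proof (intro allI impI)
      fix m :: nat assume m1: "m \<ge> 1"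
      show "h m = \<sigma> * (- (real m * k (m - 1)) - 4 / real (m + 1) * QQ h m)
                  / (2 ^ (2 - kdelta m 1) * sqrt (- k 0))"
      proof (cases "m = 1")
        case True
        have "h 1 = \<sigma> * (- k 0) / (2 * s)"
          using h1 s0 ss by (simp add: field_simps)
        then show ?thesis using True by (simp add: kdelta_def QQ_def s_def)
      next
        case False
        hence m2: "m \<ge> 2" using m1 by simp
        have E: "4 * (2 * real (m + 1) * h 1 * h m + QQ h m) + real (m+1) * real m * k (m - 1) = 0"
          using A[rule_format, of "m+1"] PPm[of h m k, OF h0 m2] by simp
        have E2: "4 * (\<sigma> * s) * h m = - (real m * k (m - 1)) - 4 / real (m + 1) * QQ h m"
          using E unfolding h1[symmetric] by (simp add: field_simps)
        have "h m = \<sigma> * (- (real m * k (m - 1)) - 4 / real (m + 1) * QQ h m) / (4 * s)"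
          unfolding E2[symmetric] using s0 \<sigma>sq by (simp add: field_simps)
        then show ?thesis using False by (simp add: kdelta_def s_def)
      qed
    qed
    moreover have sig: "\<sigma> \<in> {1, -1}" by (simp add: \<sigma>_def)
    ultimately show "h 0 = 0 \<and> (\<exists>\<sigma>::real. \<sigma> \<in> {1, -1} \<and> (\<forall>m::nat. m \<ge> 1 \<longrightarrow>
       h m = \<sigma> * (- (real m * k (m - 1)) - 4 / real (m + 1) * QQ h m)
                  / (2 ^ (2 - kdelta m 1) * sqrt (- k 0))))"
      using h0 sig by blast
  next
    assume B: "h 0 = 0 \<and> (\<exists>\<sigma>::real. \<sigma> \<in> {1, -1} \<and> (\<forall>m::nat. m \<ge> 1 \<longrightarrow>
       h m = \<sigma> * (- (real m * k (m - 1)) - 4 / real (m + 1) * QQ h m)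
                  / (2 ^ (2 - kdelta m 1) * sqrt (- k 0))))"
    then obtain \<sigma> where h0: "h 0 = 0" and sig: "\<sigma> \<in> {1, -1}" and
      F: "\<And>m. m \<ge> 1 \<Longrightarrow> h m = \<sigma> * (- (real m * k (m - 1)) - 4 / real (m + 1) * QQ h m)
                  / (2 ^ (2 - kdelta m 1) * s)" unfolding s_def by blast
    have \<sigma>sq: "\<sigma> * \<sigma> = 1" using sig by auto
    have "h 1 = \<sigma> * (- k 0) / (2 * s)" using F[of 1] by (simp add: kdelta_def QQ_def)
    hence "2 * h 1 = \<sigma> * (s * s) / s" using ss s0 by simp
    hence h1: "2 * h 1 = \<sigma> * s" using s0 by simp
    show "\<forall>n. PP h k n = 0"
    proof
      fix n :: nat
      have "n = 0 \<or> n = 1 \<or> n = 2 \<or> (n - 1 \<ge> 2 \<and> n = (n - 1) + 1)" by arith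
      then consider "n = 0" | "n = 1" | "n = 2" | m where "n = m + 1" "m \<ge> 2"
        by blast
      then show "PP h k n = 0"
      proof cases
        case 1 then show ?thesis by (simp add: PP0 h0)
      next
        case 2 then show ?thesis using PP1[of h k] by (simp add: h0)
      next
        case 3
        have "(2 * h 1)^2 = s^2" using h1 \<sigma>sq by (simp add: power2_eq_square algebra_simps)
        then show ?thesis using 3 PP2[of h k, OF h0] ss by (simp add: power2_eq_square)
      next
        case 4
        then obtain m where n: "n = m + 1" and m2: "m \<ge> 2" by blast
        define X where "X = - (real m * k (m - 1)) - 4 / real (m + 1) * QQ h m"
        have "h m = \<sigma> * X / (4 * s)"
          using F[of m] m2 unfolding X_def by (simp add: kdelta_def)
        hence "4 * s * h m = \<sigma> * X"
          using s0 by (simp add: field_simps)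
        hence Y: "\<sigma> * (4 * s * h m) = (\<sigma> * \<sigma>) * X"
          by (simp add: mult.assoc)
        have "8 * h 1 * h m = 4 * (2 * h 1) * h m" by simp
        also have "\<dots> = \<sigma> * (4 * s * h m)" using h1 by (simp add: algebra_simps)
        also have "\<dots> = X"
          using Y \<sigma>sq by simp
        finally have "8 * h 1 * h m = (- (real m * k (m - 1)) - 4 / real (m + 1) * QQ h m)"
          unfolding X_def .
        then show ?thesis using n PPm[of h m k, OF h0 m2] by (simp add: field_simps)
      qed
    qed
  qed
qed



lemma fps_nth_conv_deriv_real:
  fixes f :: "real fps"
  assumes "fps_conv_radius f > 0"
  shows   "fps_nth f n = (deriv ^^ n) (eval_fps f) 0 / fact n"
  using assms
proof (induction n arbitrary: f)
  case 0
  thus ?case by (simp add: eval_fps_def)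
next
  case (Suc n f)
  have "(deriv ^^ Suc n) (eval_fps f) 0 = (deriv ^^ n) (deriv (eval_fps f)) 0"
    unfolding funpow_Suc_right o_def ..
  also have "eventually (\<lambda>z::real. z \<in> eball 0 (fps_conv_radius f)) (nhds 0)"
    using Suc.prems by (intro eventually_nhds_in_open) (auto simp: zero_ereal_def)
  hence "eventually (\<lambda>z. deriv (eval_fps f) z = eval_fps (fps_deriv f) z) (nhds 0)"
    by eventually_elim (simp add: eval_fps_deriv)
  hence "(deriv ^^ n) (deriv (eval_fps f)) 0 = (deriv ^^ n) (eval_fps (fps_deriv f)) 0"
    by (intro higher_deriv_cong_ev refl)
  also have "\<dots> / fact n = fps_nth (fps_deriv f) n"
    using Suc.prems fps_conv_radius_deriv[of f] 
    by (intro Suc.IH [symmetric]) auto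
  also have "\<dots> / of_nat (Suc n) = fps_nth f (Suc n)"
    by (simp add: fps_deriv_def del: of_nat_Suc)
  finally show ?case by (simp add: field_split_simps)
qed

lemma fps_nth_fps_expansion_real:
  fixes f :: "real \<Rightarrow> real"
  assumes "f has_fps_expansion F"
  shows   "fps_nth F n = (deriv ^^ n) f 0 / fact n"
proof -
  have "fps_nth F n = (deriv ^^ n) (eval_fps F) 0 / fact n"
    using assms by (intro fps_nth_conv_deriv_real) (auto simp: has_fps_expansion_def)
  also have "(deriv ^^ n) (eval_fps F) 0 = (deriv ^^ n) f 0"
    using assms by (intro higher_deriv_cong_ev) (auto simp: has_fps_expansion_def)
  finally show ?thesis .
qed

lemma deriv_funpow_zero: "(deriv ^^ n) (\<lambda>_::real. 0::real) = (\<lambda>_. 0)"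
  by (induction n) auto

lemma fps_zero_unique:
  fixes F :: "real fps"
  assumes "fps_conv_radius F > 0" "eventually (\<lambda>z. eval_fps F z = 0) (nhds 0)"
  shows "F = 0"
proof (rule fps_ext)
  fix n
  have "(\<lambda>_::real. 0::real) has_fps_expansion F"
    using assms unfolding has_fps_expansion_def by simp
  from fps_nth_fps_expansion_real[OF this, of n] show "F $ n = 0 $ n"
    by (simp add: deriv_funpow_zero)
qed

lemma analytic_expansion:
  assumes "real_analytic_on f S" "x \<in> S"
  shows "\<exists>F. (\<lambda>z. f (x + z)) has_fps_expansion F"
proof -
  obtain r a where r: "r > 0" and sm: "\<And>y. \<bar>y - x\<bar> < r \<Longrightarrow> (\<lambda>n. a n * (y - x) ^ n) sums f y"
    using assms unfolding real_analytic_on_def by blast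
  define F where "F = Abs_fps a"
  have rad: "fps_conv_radius F \<ge> ereal r"
    unfolding fps_conv_radius_def F_def
  proof (rule conv_radius_geI_ex')
    fix r' :: real assume "0 < r'" "ereal r' < ereal r"
    then have "\<bar>(x + r') - x\<bar> < r" by simp
    from sums_summable[OF sm[OF this]] show "summable (\<lambda>n. Abs_fps a $ n * of_real r' ^ n)"
      by simp
  qed
  have ev: "eventually (\<lambda>z. eval_fps F z = f (x + z)) (nhds 0)"
  proof -
    have "eventually (\<lambda>z::real. z \<in> ball 0 r) (nhds 0)"
      using r by (intro eventually_nhds_in_open) auto
    then show ?thesis
    proof eventually_elim
      case (elim z)
      then have "\<bar>(x + z) - x\<bar> < r" by simp
      from sums_unique[OF sm[OF this]] show ?case
        by (simp add: eval_fps_def F_def)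
    qed
  qed
  have "fps_conv_radius F > 0" using rad r by (metis ereal_less(2) order_less_le_trans)
  with ev show ?thesis unfolding has_fps_expansion_def by blast
qed

lemma isolated_zeros_fps:
  fixes F :: "real fps"
  assumes "fps_conv_radius F > 0" "F \<noteq> 0"
  shows "\<exists>\<delta>>0. \<forall>z. 0 < \<bar>z\<bar> \<and> \<bar>z\<bar> < \<delta> \<longrightarrow> eval_fps F z \<noteq> 0"
proof (cases "F $ 0 = 0")
  case False
  have "continuous (at 0) (eval_fps F)"
    using assms(1) by (intro continuous_eval_fps) (simp only: norm_zero zero_ereal_def[symmetric])
  moreover have "eval_fps F 0 \<noteq> 0" using False by (simp add: eval_fps_at_0)
  ultimately obtain \<delta> where "\<delta> > 0" "\<And>z. dist 0 z < \<delta> \<Longrightarrow> eval_fps F z \<noteq> 0"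
    using continuous_at_avoid[of 0 "eval_fps F" 0] by blast
  then show ?thesis by (intro exI[of _ \<delta>]) auto
next
  case True
  obtain m where m: "F $ m \<noteq> 0" using assms(2) by (metis fps_ext fps_zero_nth)
  with True have m0: "m > 0" by (cases m) auto
  obtain r :: real where r: "0 < ereal r" "ereal r < fps_conv_radius F"
    using ereal_dense2[OF assms(1)] by (auto simp: zero_ereal_def)
  have r0: "r > 0" using r(1) by simp
  have sm: "\<And>x. norm (x - 0) < r \<Longrightarrow> (\<lambda>n. fps_nth F n * (x - 0) ^ n) sums (eval_fps F x)"
  proof -
    fix x :: real assume "norm (x - 0) < r"
    then have "ereal (norm x) < ereal r" by simp
    then have "ereal (norm x) < fps_conv_radius F" using r(2) by (rule order_less_trans)
    then have "(\<lambda>n. fps_nth F n * x ^ n) sums eval_fps F x" by (rule sums_eval_fps)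
    then show "(\<lambda>n. fps_nth F n * (x - 0) ^ n) sums (eval_fps F x)" by simp
  qed
  have f0: "eval_fps F 0 = 0" using True by (simp add: eval_fps_at_0)
  obtain s where s: "0 < s" "\<And>z. z \<in> cball 0 s - {0} \<Longrightarrow> eval_fps F z \<noteq> 0"
    using powser_0_nonzero[OF r0 sm f0 m m0] by blast
  show ?thesis
    using s by (intro exI[of _ s]) (auto simp: dist_real_def)
qed

lemma identity_real:
  fixes g :: "real \<Rightarrow> real" and I :: "real set"
  assumes conn: "connected I" and opI: "open I"
    and exp: "\<And>x. x \<in> I \<Longrightarrow> \<exists>G. (\<lambda>z. g (x + z)) has_fps_expansion G"
    and x0: "x0 \<in> I" and ev0: "eventually (\<lambda>y. g y = 0) (nhds x0)"
    and x: "x \<in> I"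
  shows "g x = 0"
proof -
  define S where "S = I \<inter> interior {y. g y = 0}"
  define T where "T = {x\<in>I. \<exists>\<delta>>0. \<forall>y. 0 < \<bar>y - x\<bar> \<and> \<bar>y - x\<bar> < \<delta> \<longrightarrow> g y \<noteq> 0}"
  have S_iff: "y \<in> S \<longleftrightarrow> y \<in> I \<and> eventually (\<lambda>y. g y = 0) (nhds y)" for y
    unfolding S_def eventually_nhds interior_def by auto
  have opS: "open S" unfolding S_def using opI by auto
  have opT: "open T"
    unfolding open_dist
  proof (intro ballI)
    fix x assume "x \<in> T"
    then obtain \<delta> where xI: "x \<in> I" and d: "\<delta> > 0" and
      nz: "\<And>y. 0 < \<bar>y - x\<bar> \<Longrightarrow> \<bar>y - x\<bar> < \<delta> \<Longrightarrow> g y \<noteq> 0"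
      unfolding T_def by blast
    obtain e where e: "e > 0" "\<And>y. dist y x < e \<Longrightarrow> y \<in> I"
      using opI xI unfolding open_dist by blast
    show "\<exists>e'>0. \<forall>y. dist y x < e' \<longrightarrow> y \<in> T"
    proof (intro exI[of _ "min \<delta> e"] conjI allI impI)
      show "0 < min \<delta> e" using d e by simp
      fix y assume dy: "dist y x < min \<delta> e"
      have yI: "y \<in> I" using e dy by simp
      show "y \<in> T"
      proof (cases "y = x")
        case True then show ?thesis using \<open>x \<in> T\<close> by simp
      next
        case False
        define d' where "d' = min \<bar>y - x\<bar> (\<delta> - \<bar>y - x\<bar>)"
        have d'0: "d' > 0" using False dy unfolding d'_def dist_real_def by auto
        have "\<forall>w. 0 < \<bar>w - y\<bar> \<and> \<bar>w - y\<bar> < d' \<longrightarrow> g w \<noteq> 0"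
        proof (intro allI impI)
          fix w assume w: "0 < \<bar>w - y\<bar> \<and> \<bar>w - y\<bar> < d'"
          show "g w \<noteq> 0"
            by (rule nz) (use w in \<open>auto simp: d'_def\<close>)
        qed
        then show ?thesis unfolding T_def using yI d'0 by blast
      qed
    qed
  qed
  have disj: "S \<inter> T \<inter> I = {}"
  proof (rule ccontr)
    assume "S \<inter> T \<inter> I \<noteq> {}"
    then obtain y where yS: "y \<in> S" and yT: "y \<in> T" by blast
    from yS have "eventually (\<lambda>y. g y = 0) (nhds y)" by (simp add: S_iff)
    then obtain d where d: "d > 0" "\<And>w. dist w y < d \<Longrightarrow> g w = 0"
      unfolding eventually_nhds_metric by blast
    from yT obtain \<delta> where \<delta>: "\<delta> > 0" "\<And>w. 0 < \<bar>w - y\<bar> \<and> \<bar>w - y\<bar> < \<delta> \<Longrightarrow> g w \<noteq> 0"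
      unfolding T_def by blast
    define w where "w = y + min d \<delta> / 2"
    have "g w = 0" using d \<delta> by (intro d(2)) (simp add: w_def dist_real_def)
    moreover have "g w \<noteq> 0" using d \<delta> by (intro \<delta>(2)) (simp add: w_def)
    ultimately show False by simp
  qed
  have cover: "I \<subseteq> S \<union> T"
  proof
    fix x assume xI: "x \<in> I"
    obtain G where G: "(\<lambda>z. g (x + z)) has_fps_expansion G" using exp[OF xI] by blast
    have rad: "fps_conv_radius G > 0" and evG: "eventually (\<lambda>z. eval_fps G z = g (x + z)) (nhds 0)"
      using G unfolding has_fps_expansion_def by auto
    obtain d where d: "d > 0" "\<And>z. dist z 0 < d \<Longrightarrow> eval_fps G z = g (x + z)"
      using evG unfolding eventually_nhds_metric by blast
    show "x \<in> S \<union> T"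
    proof (cases "G = 0")
      case True
      have "eventually (\<lambda>y. g y = 0) (nhds x)"
        unfolding eventually_nhds_metric
      proof (intro exI[of _ d] conjI allI impI)
        fix y assume "dist y x < d"
        then have "dist (y - x) 0 < d" by (simp add: dist_real_def)
        from d(2)[OF this] show "g y = 0" using True by simp
      qed (use d in auto)
      then show ?thesis using xI S_iff by blast
    next
      case False
      obtain \<delta> where \<delta>: "\<delta> > 0" "\<And>z. 0 < \<bar>z\<bar> \<and> \<bar>z\<bar> < \<delta> \<Longrightarrow> eval_fps G z \<noteq> 0"
        using isolated_zeros_fps[OF rad False] by blast
      have "\<forall>y. 0 < \<bar>y - x\<bar> \<and> \<bar>y - x\<bar> < min \<delta> d \<longrightarrow> g y \<noteq> 0"
      proof (intro allI impI)
        fix y assume y: "0 < \<bar>y - x\<bar> \<and> \<bar>y - x\<bar> < min \<delta> d"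
        then have "dist (y - x) 0 < d" by (simp add: dist_real_def)
        from d(2)[OF this] have "eval_fps G (y - x) = g y" by simp
        moreover have "eval_fps G (y - x) \<noteq> 0" using y by (intro \<delta>(2)) simp
        ultimately show "g y \<noteq> 0" by simp
      qed
      then have "x \<in> T" unfolding T_def using xI \<delta> d by (intro CollectI conjI exI[of _ "min \<delta> d"]) auto
      then show ?thesis by blast
    qed
  qed
  have "S \<inter> I = {} \<or> T \<inter> I = {}"
    using connectedD[OF conn opS opT disj cover] .
  moreover have "x0 \<in> S" using x0 ev0 S_iff by blast
  ultimately have "T \<inter> I = {}" using x0 by blast
  with cover x have "x \<in> S" by blast
  then have "eventually (\<lambda>y. g y = 0) (nhds x)" by (simp add: S_iff)
  then show "g x = 0" by (rule eventually_nhds_x_imp_x)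
qed


lemma coeff_PP:
  fixes FH FK :: "real fps" and h k :: "nat \<Rightarrow> real"
  assumes hh: "\<And>i. FH $ i = h i / fact i" and kk: "\<And>i. FK $ i = k i / fact i"
  shows "fact n * (fps_const 4 * (FH * FH) + (fps_X * fps_X) * FK) $ n = PP h k n"
proof -
  have A: "fact n * (FH * FH) $ n = (\<Sum>i\<le>n. real (n choose i) * h i * h (n - i))"
    unfolding fps_mult_nth atLeast0AtMost sum_distrib_left
  proof (intro sum.cong refl)
    fix i assume "i \<in> {..n}"
    then have i: "i \<le> n" by simp
    have "fact n * (h i / fact i * (h (n - i) / fact (n - i))) =
          (fact n / (fact i * fact (n - i))) * h i * h (n - i)" by (simp add: field_simps)
    also have "\<dots> = real (n choose i) * h i * h (n - i)" by (simp add: binomial_fact[OF i])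
    finally show "fact n * (FH $ i * FH $ (n - i)) = real (n choose i) * h i * h (n - i)"
      by (simp add: hh)
  qed
  have B: "fact n * ((fps_X * fps_X) * FK) $ n = (if n \<ge> 2 then real n * real (n - 1) * k (n - 2) else 0)"
  proof (cases "n \<ge> 2")
    case True
    then obtain j where n: "n = j + 2" by (metis add.commute le_iff_add)
    have "fact n * ((fps_X * fps_X) * FK) $ n = fact (j + 2) * (k j / fact j)"
      using n by (simp add: fps_X_power_mult_nth[of 2, unfolded power2_eq_square] kk)
    also have "\<dots> = real (j + 2) * real (j + 1) * k j"
      by (simp add: fact_Suc field_simps numeral_2_eq_2)
    finally show ?thesis using n by simp
  next
    case False
    then show ?thesis by (simp add: fps_X_power_mult_nth[of 2, unfolded power2_eq_square])
  qed
  have C: "(fps_const 4 * (FH * FH) + (fps_X * fps_X) * FK) $ n = 4 * (FH * FH) $ n + ((fps_X * fps_X) * FK) $ n"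
    by simp
  have "fact n * (fps_const 4 * (FH * FH) + (fps_X * fps_X) * FK) $ n =
     4 * (fact n * (FH * FH) $ n) + fact n * ((fps_X * fps_X) * FK) $ n"
    unfolding C by (simp only: distrib_left mult.left_commute)
  also have "\<dots> = PP h k n" unfolding A B PP_def ..
  finally show ?thesis .
qed

theorem lemma1:
  fixes \<epsilon> :: real and H K :: "real \<Rightarrow> real"
  assumes "\<epsilon> > 0"
    and "real_analytic_on H {-\<epsilon><..<\<epsilon>}"
    and "real_analytic_on K {-\<epsilon><..<\<epsilon>}"
    and "K 0 < 0"
  shows "(\<forall>t. \<bar>t\<bar> < \<epsilon> \<longrightarrow> 4 * (H t)\<^sup>2 = - (t\<^sup>2 * K t)) \<longleftrightarrow>
         (H 0 = 0 \<and>
          (\<exists>\<sigma>::real. \<sigma> \<in> {1, -1} \<and>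
            (\<forall>m::nat. m \<ge> 1 \<longrightarrow>
              (deriv ^^ m) H 0 =
                \<sigma> * (- (real m * (deriv ^^ (m - 1)) K 0)
                      - 4 / real (m + 1) *
                        (\<Sum>r\<in>{2..m - 1}. real ((m + 1) choose r) *
                            (deriv ^^ r) H 0 * (deriv ^^ (m - r + 1)) H 0))
                  / (2 ^ (2 - kdelta m 1) * sqrt (- K 0)))))"
proof -
  define I where "I = {-\<epsilon><..<\<epsilon>}"
  define g where "g t = 4 * (H t * H t) + (t * t) * K t" for t
  define h where "h i = (deriv ^^ i) H 0" for i
  define k where "k i = (deriv ^^ i) K 0" for i
  have I0: "0 \<in> I" using assms(1) by (simp add: I_def)
  have opI: "open I" unfolding I_def by simp
  have connI: "connected I" unfolding I_def by (simp add: convex_connected)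
  have LHS: "(\<forall>t. \<bar>t\<bar> < \<epsilon> \<longrightarrow> 4 * (H t)\<^sup>2 = - (t\<^sup>2 * K t)) \<longleftrightarrow> (\<forall>t\<in>I. g t = 0)"
  proof -
    have 1: "t \<in> I \<longleftrightarrow> \<bar>t\<bar> < \<epsilon>" for t by (auto simp: I_def abs_less_iff)
    have 2: "4 * (H t)\<^sup>2 = - (t\<^sup>2 * K t) \<longleftrightarrow> g t = 0" for t
      unfolding g_def power2_eq_square by linarith
    show ?thesis using 1 2 by blast
  qed
  have expx: "\<exists>G. (\<lambda>z. g (x + z)) has_fps_expansion G" if xI: "x \<in> I" for x
  proof -
    obtain FHx where hx: "(\<lambda>z. H (x + z)) has_fps_expansion FHx"
      using analytic_expansion[OF assms(2)] xI unfolding I_def by blast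
    obtain FKx where kx: "(\<lambda>z. K (x + z)) has_fps_expansion FKx"
      using analytic_expansion[OF assms(3)] xI unfolding I_def by blast
    have xz: "(\<lambda>z. x + z) has_fps_expansion fps_const x + fps_X"
      by (intro has_fps_expansion_add has_fps_expansion_const has_fps_expansion_fps_X)
    have "(\<lambda>z. 4 * (H (x + z) * H (x + z)) + ((x + z) * (x + z)) * K (x + z)) has_fps_expansion
            fps_const 4 * (FHx * FHx) + ((fps_const x + fps_X) * (fps_const x + fps_X)) * FKx"
      by (intro has_fps_expansion_add has_fps_expansion_cmult_left has_fps_expansion_mult hx kx xz)
    then show ?thesis unfolding g_def by blast
  qed
  obtain FH where hH: "H has_fps_expansion FH"
  proof -
    obtain F where "(\<lambda>z. H (0 + z)) has_fps_expansion F"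
      using analytic_expansion[OF assms(2)] I0 unfolding I_def by blast
    then have "H has_fps_expansion F" by simp
    then show ?thesis using that by blast
  qed
  obtain FK where kK: "K has_fps_expansion FK"
  proof -
    obtain F where "(\<lambda>z. K (0 + z)) has_fps_expansion F"
      using analytic_expansion[OF assms(3)] I0 unfolding I_def by blast
    then have "K has_fps_expansion F" by simp
    then show ?thesis using that by blast
  qed
  define G where "G = fps_const 4 * (FH * FH) + (fps_X * fps_X) * FK"
  have gG: "g has_fps_expansion G"
  proof -
    have "(\<lambda>z. 4 * (H z * H z) + (z * z) * K z) has_fps_expansion G"
      unfolding G_def
      by (intro has_fps_expansion_add has_fps_expansion_cmult_left has_fps_expansion_mult hH kK
            has_fps_expansion_fps_X)
    then show ?thesis unfolding g_def by simp
  qed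
  have radG: "fps_conv_radius G > 0" and evG: "eventually (\<lambda>z. eval_fps G z = g z) (nhds 0)"
    using gG unfolding has_fps_expansion_def by auto
  have hh: "FH $ i = h i / fact i" for i unfolding h_def by (rule fps_nth_fps_expansion_real[OF hH])
  have kk: "FK $ i = k i / fact i" for i unfolding k_def by (rule fps_nth_fps_expansion_real[OF kK])
  have GPP: "G = 0 \<longleftrightarrow> (\<forall>n. PP h k n = 0)"
  proof -
    have "G = 0 \<longleftrightarrow> (\<forall>n. G $ n = 0)" by (simp add: fps_eq_iff)
    also have "\<dots> \<longleftrightarrow> (\<forall>n. fact n * G $ n = 0)" by simp
    also have "\<dots> \<longleftrightarrow> (\<forall>n. PP h k n = 0)" unfolding G_def coeff_PP[OF hh kk] ..
    finally show ?thesis .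
  qed
  have gl: "(\<forall>t\<in>I. g t = 0) \<longleftrightarrow> G = 0"
  proof
    assume A: "\<forall>t\<in>I. g t = 0"
    have "eventually (\<lambda>z. z \<in> I) (nhds 0)" using opI I0 by (rule eventually_nhds_in_open)
    with evG have "eventually (\<lambda>z. eval_fps G z = 0) (nhds 0)"
      by eventually_elim (use A in auto)
    then show "G = 0" using radG fps_zero_unique by blast
  next
    assume G0: "G = 0"
    from evG have ev0: "eventually (\<lambda>z. g z = 0) (nhds 0)"
      by eventually_elim (simp add: G0)
    show "\<forall>t\<in>I. g t = 0"
      using identity_real[OF connI opI expx I0 ev0] by blast
  qed
  have k0: "k 0 < 0" using assms(4) by (simp add: k_def)
  have "(\<forall>t. \<bar>t\<bar> < \<epsilon> \<longrightarrow> 4 * (H t)\<^sup>2 = - (t\<^sup>2 * K t)) \<longleftrightarrow>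
    (h 0 = 0 \<and> (\<exists>\<sigma>::real. \<sigma> \<in> {1, -1} \<and> (\<forall>m::nat. m \<ge> 1 \<longrightarrow>
       h m = \<sigma> * (- (real m * k (m - 1)) - 4 / real (m + 1) * QQ h m)
                  / (2 ^ (2 - kdelta m 1) * sqrt (- k 0)))))"
    using LHS gl GPP alg[of k h, OF k0] by simp
  then show ?thesis unfolding h_def k_def QQ_def by simp
qed

end
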